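(* In the simplified model with conditional inclusion lists, regardless of the payment rule, if $B_1>f_{BP}$, then there is a Nash equilibrium in which every includer omits $t_0$ from its inclusion list and the block producer omits $t_0$ from the block.
   Context: Simplified model (single slot, complete information, Nash equilibrium). Players: a block producer and $m$ includers with distinct orders $1,\dots,m$. A mempool $M$ of $w$ user transactions, each of size $s>0$; $t_0\in M$ is a target transaction. Each inclusion list holds at most $c_{Incl}$ transactions and the block at most $c_{block}$. Each includer chooses an inclusion list consisting of transactions from $M$ and/or fake transactions it creates; then the block producer, seeing all lists, chooses a block consisting of transactions from $M$ and/or fake transactions it creates. No party may add transactions to the mempool. Every transaction in an approved block pays burning fee $r\cdot s$ ($r\ge0$); for fake transactions this is paid by their creator. Processing costs are zero. Conditional inclusion lists: the attesters reject the block iff some transaction appearing in an inclusion list is missing from the block while the block contains fewer than $c_{block}$ transactions. If the block is rejected, the block producer and includers receive no fees. Payments: if $t_0$ is in an approved block, the block producer receives $f_{BP}\ge0$ from $t_0$ (whether or not $t_0$ is in a list); the includers collectively receive at most $f_{CM}\ge0$ from $t_0$, and only if $t_0$ is in some inclusion list and in the approved block. An external briber pays the block producer $B_1$ if $t_0$ is not in its block, and pays includer $j$ the amount $B^j\ge0$ if $t_0$ is not in its inclusion list. Each player's utility is fees received plus bribes received minus burning fees paid for its own fake transactions in an approved block. *)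

theory Defs
  imports Main "HOL.Real"
begin

text \<open>Players: the block producer BP and includers Inc j (j = 1..m, j is the includer's order).\<close>
datatype player = BP | Inc nat

text \<open>Transactions: a user transaction from the mempool (type 'a), or a fake transaction
  created by a player (unboundedly many, indexed by nat).\<close>
datatype 'a tx = Mem 'a | Fake player nat

definition valid_list :: "'a set \<Rightarrow> nat \<Rightarrow> nat \<Rightarrow> 'a tx set \<Rightarrow> bool" where
  "valid_list M cIncl j L \<longleftrightarrow> finite L \<and> card L \<le> cIncl \<and>
     (\<forall>x\<in>L. case x of Mem t \<Rightarrow> t \<in> M | Fake p k \<Rightarrow> p = Inc j)"

definition valid_block :: "'a set \<Rightarrow> nat \<Rightarrow> 'a tx set \<Rightarrow> bool" where
  "valid_block M cblock b \<longleftrightarrow> finite b \<and> card b \<le> cblock \<and>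
     (\<forall>x\<in>b. case x of Mem t \<Rightarrow> t \<in> M | Fake p k \<Rightarrow> p = BP)"

definition approved :: "nat \<Rightarrow> nat \<Rightarrow> (nat \<Rightarrow> 'a tx set) \<Rightarrow> 'a tx set \<Rightarrow> bool" where
  "approved m cblock L b \<longleftrightarrow>
     \<not> ((\<exists>j\<in>{1..m}. \<exists>x\<in>L j. x \<notin> b) \<and> card b < cblock)"

definition burn :: "real \<Rightarrow> real \<Rightarrow> player \<Rightarrow> 'a tx set \<Rightarrow> real" where
  "burn r s p b = r * s * real (card {k. Fake p k \<in> b})"

definition u_BP :: "nat \<Rightarrow> nat \<Rightarrow> real \<Rightarrow> real \<Rightarrow> real \<Rightarrow> real \<Rightarrow> 'a
    \<Rightarrow> (nat \<Rightarrow> 'a tx set) \<Rightarrow> 'a tx set \<Rightarrow> real" where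
  "u_BP m cblock r s fBP B1 t0 L b =
     (if approved m cblock L b
      then (if Mem t0 \<in> b then fBP else 0) - burn r s BP b else 0)
     + (if Mem t0 \<notin> b then B1 else 0)"

text \<open>Utility of includer j. The payment rule pay gives includer j's share of the
  includers' fee from t0; it is only paid if t0 is in some list and in the approved block.\<close>
definition u_Inc :: "nat \<Rightarrow> nat \<Rightarrow> real \<Rightarrow> real \<Rightarrow> (nat \<Rightarrow> real) \<Rightarrow> 'a
    \<Rightarrow> ((nat \<Rightarrow> 'a tx set) \<Rightarrow> 'a tx set \<Rightarrow> nat \<Rightarrow> real)
    \<Rightarrow> nat \<Rightarrow> (nat \<Rightarrow> 'a tx set) \<Rightarrow> 'a tx set \<Rightarrow> real" where
  "u_Inc m cblock r s Bj t0 pay j L b =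
     (if approved m cblock L b \<and> Mem t0 \<in> b \<and> (\<exists>i\<in>{1..m}. Mem t0 \<in> L i)
      then pay L b j else 0)
     + (if Mem t0 \<notin> L j then Bj j else 0)
     - (if approved m cblock L b then burn r s (Inc j) b else 0)"

definition payment_rule :: "nat \<Rightarrow> real \<Rightarrow> ((nat \<Rightarrow> 'a tx set) \<Rightarrow> 'a tx set \<Rightarrow> nat \<Rightarrow> real) \<Rightarrow> bool" where
  "payment_rule m fCM pay \<longleftrightarrow>
     (\<forall>L b j. 0 \<le> pay L b j) \<and> (\<forall>L b. (\<Sum>j\<in>{1..m}. pay L b j) \<le> fCM)"

text \<open>Nash equilibrium of the two-stage game: includers' lists L (for j = 1..m) and the block
  producer's strategy sigma mapping every list profile to a block.\<close>
definition nash_eq :: "'a set \<Rightarrow> nat \<Rightarrow> nat \<Rightarrow> nat \<Rightarrow> real \<Rightarrow> real \<Rightarrow> real \<Rightarrow> real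
    \<Rightarrow> (nat \<Rightarrow> real) \<Rightarrow> 'a \<Rightarrow> ((nat \<Rightarrow> 'a tx set) \<Rightarrow> 'a tx set \<Rightarrow> nat \<Rightarrow> real)
    \<Rightarrow> (nat \<Rightarrow> 'a tx set) \<Rightarrow> ((nat \<Rightarrow> 'a tx set) \<Rightarrow> 'a tx set) \<Rightarrow> bool" where
  "nash_eq M m cIncl cblock r s fBP B1 Bj t0 pay L \<sigma> \<longleftrightarrow>
     (\<forall>j\<in>{1..m}. valid_list M cIncl j (L j)) \<and>
     (\<forall>L'. valid_block M cblock (\<sigma> L')) \<and>
     (\<forall>b. valid_block M cblock b \<longrightarrow>
        u_BP m cblock r s fBP B1 t0 L b \<le> u_BP m cblock r s fBP B1 t0 L (\<sigma> L)) \<and>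
     (\<forall>j\<in>{1..m}. \<forall>Lj. valid_list M cIncl j Lj \<longrightarrow>
        u_Inc m cblock r s Bj t0 pay j (L(j := Lj)) (\<sigma> (L(j := Lj)))
          \<le> u_Inc m cblock r s Bj t0 pay j L (\<sigma> L))"

end

theory Submission
  imports Defs
begin

theorem mainTheorem7:
  fixes M :: "'a set" and t0 :: 'a and m w cIncl cblock :: nat
    and s r fBP fCM B1 :: real and Bj :: "nat \<Rightarrow> real"
    and pay :: "(nat \<Rightarrow> 'a tx set) \<Rightarrow> 'a tx set \<Rightarrow> nat \<Rightarrow> real"
  assumes "finite M" and "card M = w" and "t0 \<in> M"
    and "s > 0" and "r \<ge> 0" and "fBP \<ge> 0" and "fCM \<ge> 0"
    and "\<forall>j\<in>{1..m}. Bj j \<ge> 0"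
    and "payment_rule m fCM pay"
    and "B1 > fBP"
  shows "\<exists>L \<sigma>. nash_eq M m cIncl cblock r s fBP B1 Bj t0 pay L \<sigma> \<and>
           (\<forall>j\<in>{1..m}. Mem t0 \<notin> L j) \<and> Mem t0 \<notin> \<sigma> L"
proof -
  let ?L = "(\<lambda>_. {}) :: nat \<Rightarrow> 'a tx set"
  let ?s = "(\<lambda>_. {}) :: (nat \<Rightarrow> 'a tx set) \<Rightarrow> 'a tx set"
  have b0: "burn r s p {} = 0" for p unfolding burn_def by simp
  have bge: "burn r s p b \<ge> 0" for p b unfolding burn_def using assms(4,5) by simp
  have ap: "approved m cblock ?L {}" unfolding approved_def by simp
  have bp: "u_BP m cblock r s fBP B1 t0 ?L b \<le> u_BP m cblock r s fBP B1 t0 ?L (?s ?L)" for b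
    using ap bge[of BP b] assms(6,10) unfolding u_BP_def b0 by (auto simp: b0)
  have inc: "u_Inc m cblock r s Bj t0 pay j (?L(j := Lj)) (?s (?L(j := Lj)))
          \<le> u_Inc m cblock r s Bj t0 pay j ?L (?s ?L)" if "j \<in> {1..m}" for j Lj
    using that assms(8) unfolding u_Inc_def by (auto simp: b0)
  have "nash_eq M m cIncl cblock r s fBP B1 Bj t0 pay ?L ?s"
    unfolding nash_eq_def valid_list_def valid_block_def using bp inc by auto
  then show ?thesis by blast
qed

end
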